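(* Let $\mathbf{M}$ be any many-valued logic and let $A_1,\ldots,A_n$ be formulas that are not tautologies of $\mathbf{M}$. Then there is a finite-valued logic $\mathbf{M}'$ over the same language such that (1) none of $A_1,\ldots,A_n$ is a tautology of $\mathbf{M}'$; (2) $\mathrm{Taut}(\mathbf{M})\subseteq\mathrm{Taut}(\mathbf{M}')$; and (3) $|V(\mathbf{M}')| \le \prod_{i=1}^n \xi(A_i)$, where $\xi(A_i)$ is the number of subformulas of $A_i$ plus $1$.
   Context: A propositional language consists of variables $X_1,X_2,\ldots$ and finitely many connectives with given arities (0-ary ones are constants). A many-valued logic $\mathbf{M}$ is given by a set $V(\mathbf{M})$ of truth values, a subset $V^+(\mathbf{M})$ of designated values, and for each $n$-ary connective $\Box$ a truth function $\widetilde{\Box}\colon V(\mathbf{M})^n\to V(\mathbf{M})$; it is finite-valued if $V(\mathbf{M})$ is finite. A valuation assigns truth values to variables and extends to all formulas via the truth functions. A formula is a tautology of $\mathbf{M}$ if it receives a designated value under every valuation; $\mathrm{Taut}(\mathbf{M})$ denotes the set of tautologies. *)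

theory Defs
  imports Main
begin

text \<open>Formulas over variables X_0, X_1, ... (indexed by nat) and connectives of type 'c.
  A language is given by a finite type 'c of connectives together with an arity function.\<close>

datatype 'c form = Var nat | Op 'c "'c form list"

fun wf :: "('c \<Rightarrow> nat) \<Rightarrow> 'c form \<Rightarrow> bool" where
  "wf ar (Var n) = True"
| "wf ar (Op c args) = (length args = ar c \<and> (\<forall>a\<in>set args. wf ar a))"

fun subformulas :: "'c form \<Rightarrow> 'c form set" where
  "subformulas (Var n) = {Var n}"
| "subformulas (Op c args) = insert (Op c args) (\<Union>a\<in>set args. subformulas a)"

definition is_logic :: "('c \<Rightarrow> nat) \<Rightarrow> 'v set \<Rightarrow> 'v set \<Rightarrow> ('c \<Rightarrow> 'v list \<Rightarrow> 'v) \<Rightarrow> bool" where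
  "is_logic ar V D F \<longleftrightarrow> D \<subseteq> V \<and>
     (\<forall>c xs. length xs = ar c \<and> set xs \<subseteq> V \<longrightarrow> F c xs \<in> V)"

fun eval :: "('c \<Rightarrow> 'v list \<Rightarrow> 'v) \<Rightarrow> (nat \<Rightarrow> 'v) \<Rightarrow> 'c form \<Rightarrow> 'v" where
  "eval F v (Var n) = v n"
| "eval F v (Op c args) = F c (map (eval F v) args)"

definition taut :: "('c \<Rightarrow> nat) \<Rightarrow> 'v set \<Rightarrow> 'v set \<Rightarrow> ('c \<Rightarrow> 'v list \<Rightarrow> 'v) \<Rightarrow> 'c form \<Rightarrow> bool" where
  "taut ar V D F A \<longleftrightarrow> wf ar A \<and> (\<forall>v. range v \<subseteq> V \<longrightarrow> eval F v A \<in> D)"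

end

theory Submission
  imports Defs
begin

lemma finite_subformulas: "finite (subformulas A)"
  by (induction A) auto

lemma self_subformula: "A \<in> subformulas A"
  by (cases A) auto

lemma subformulas_trans: "B \<in> subformulas A \<Longrightarrow> C \<in> subformulas B \<Longrightarrow> C \<in> subformulas A"
  by (induction A arbitrary: B) auto

lemma wf_subformulas: "wf ar A \<Longrightarrow> B \<in> subformulas A \<Longrightarrow> wf ar B"
  by (induction A) auto

lemma eval_in_V:
  assumes "is_logic ar V D F" "range v \<subseteq> V"
  shows "wf ar B \<Longrightarrow> eval F v B \<in> V"
proof (induction B)
  case (Var n) then show ?case using assms by auto
next
  case (Op c args)
  then have "set (map (eval F v) args) \<subseteq> V" "length (map (eval F v) args) = ar c" by auto
  then show ?case using assms(1) unfolding is_logic_def by auto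
qed

lemma eval_prod:
  "eval (\<lambda>c xs. (F1 c (map fst xs), F2 c (map snd xs))) w B
     = (eval F1 (fst \<circ> w) B, eval F2 (snd \<circ> w) B)"
proof (induction B)
  case (Op c args)
  have "map (fst \<circ> eval (\<lambda>c xs. (F1 c (map fst xs), F2 c (map snd xs))) w) args
        = map (eval F1 (fst \<circ> w)) args"
       "map (snd \<circ> eval (\<lambda>c xs. (F1 c (map fst xs), F2 c (map snd xs))) w) args
        = map (eval F2 (snd \<circ> w)) args"
    using Op.IH by (auto simp: comp_def)
  then show ?case by (simp add: comp_def cong: map_cong)
qed simp

lemma prod_logic:
  assumes L1: "is_logic ar V1 D1 F1" and L2: "is_logic ar V2 D2 F2"
    and ne1: "V1 \<noteq> {}" and ne2: "V2 \<noteq> {}"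
  shows "is_logic ar (V1 \<times> V2) (D1 \<times> D2) (\<lambda>c xs. (F1 c (map fst xs), F2 c (map snd xs)))"
    and "taut ar (V1 \<times> V2) (D1 \<times> D2) (\<lambda>c xs. (F1 c (map fst xs), F2 c (map snd xs))) B
         \<longleftrightarrow> taut ar V1 D1 F1 B \<and> taut ar V2 D2 F2 B"
proof -
  show "is_logic ar (V1 \<times> V2) (D1 \<times> D2) (\<lambda>c xs. (F1 c (map fst xs), F2 c (map snd xs)))"
    unfolding is_logic_def
  proof (intro conjI allI impI)
    show "D1 \<times> D2 \<subseteq> V1 \<times> V2" using L1 L2 unfolding is_logic_def by auto
    fix c xs
    assume xs: "length xs = ar c \<and> set xs \<subseteq> V1 \<times> V2"
    then have "length (map fst xs) = ar c \<and> set (map fst xs) \<subseteq> V1"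
      "length (map snd xs) = ar c \<and> set (map snd xs) \<subseteq> V2" by auto
    then show "(F1 c (map fst xs), F2 c (map snd xs)) \<in> V1 \<times> V2"
      using L1 L2 unfolding is_logic_def by blast
  qed
next
  show "taut ar (V1 \<times> V2) (D1 \<times> D2) (\<lambda>c xs. (F1 c (map fst xs), F2 c (map snd xs))) B
         \<longleftrightarrow> taut ar V1 D1 F1 B \<and> taut ar V2 D2 F2 B"
  proof
    assume T: "taut ar (V1 \<times> V2) (D1 \<times> D2) (\<lambda>c xs. (F1 c (map fst xs), F2 c (map snd xs))) B"
    obtain x1 where x1: "x1 \<in> V1" using ne1 by auto
    obtain x2 where x2: "x2 \<in> V2" using ne2 by auto
    have "taut ar V1 D1 F1 B" unfolding taut_def
    proof (intro conjI allI impI)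
      show "wf ar B" using T by (simp add: taut_def)
      fix v :: "nat \<Rightarrow> _" assume "range v \<subseteq> V1"
      then have "range (\<lambda>n. (v n, x2)) \<subseteq> V1 \<times> V2" using x2 by auto
      then have "eval (\<lambda>c xs. (F1 c (map fst xs), F2 c (map snd xs))) (\<lambda>n. (v n, x2)) B \<in> D1 \<times> D2"
        using T unfolding taut_def by blast
      moreover have "fst \<circ> (\<lambda>n. (v n, x2)) = v" by (simp add: comp_def)
      ultimately show "eval F1 v B \<in> D1" unfolding eval_prod by auto
    qed
    moreover have "taut ar V2 D2 F2 B" unfolding taut_def
    proof (intro conjI allI impI)
      show "wf ar B" using T by (simp add: taut_def)
      fix v :: "nat \<Rightarrow> _" assume "range v \<subseteq> V2"
      then have "range (\<lambda>n. (x1, v n)) \<subseteq> V1 \<times> V2" using x1 by auto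
      then have "eval (\<lambda>c xs. (F1 c (map fst xs), F2 c (map snd xs))) (\<lambda>n. (x1, v n)) B \<in> D1 \<times> D2"
        using T unfolding taut_def by blast
      moreover have "snd \<circ> (\<lambda>n. (x1, v n)) = v" by (simp add: comp_def)
      ultimately show "eval F2 v B \<in> D2" unfolding eval_prod by auto
    qed
    ultimately show "taut ar V1 D1 F1 B \<and> taut ar V2 D2 F2 B" ..
  next
    assume T: "taut ar V1 D1 F1 B \<and> taut ar V2 D2 F2 B"
    show "taut ar (V1 \<times> V2) (D1 \<times> D2) (\<lambda>c xs. (F1 c (map fst xs), F2 c (map snd xs))) B"
      unfolding taut_def
    proof (intro conjI allI impI)
      show "wf ar B" using T by (simp add: taut_def)
      fix w :: "nat \<Rightarrow> _" assume w: "range w \<subseteq> V1 \<times> V2"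
      then have "range (fst \<circ> w) \<subseteq> V1" "range (snd \<circ> w) \<subseteq> V2" by auto
      then show "eval (\<lambda>c xs. (F1 c (map fst xs), F2 c (map snd xs))) w B \<in> D1 \<times> D2"
        using T unfolding taut_def eval_prod by auto
    qed
  qed
qed

lemma transfer_nat:
  assumes L: "is_logic ar V D F" and fin: "finite V"
  shows "\<exists>(V'::nat set) D' F'. is_logic ar V' D' F' \<and> finite V' \<and> card V' = card V \<and>
           (\<forall>B. taut ar V' D' F' B \<longleftrightarrow> taut ar V D F B)"
proof -
  obtain f where bij: "bij_betw f V {0..<card V}" using ex_bij_betw_finite_nat[OF fin] by blast
  have inj: "inj_on f V" using bij bij_betw_def by blast
  define g where "g = inv_into V f"
  define F' where "F' = (\<lambda>c ns. f (F c (map g ns)))"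
  have DV: "D \<subseteq> V" using L unfolding is_logic_def by auto
  have gV: "y \<in> f ` V \<Longrightarrow> g y \<in> V" for y unfolding g_def by (simp add: inv_into_into)
  have key: "wf ar B \<Longrightarrow> range w \<subseteq> f ` V \<Longrightarrow> eval F' w B = f (eval F (g \<circ> w) B)" for w B
  proof (induction B)
    case (Var n)
    then have "w n \<in> f ` V" by auto
    then show ?case unfolding g_def by (simp add: f_inv_into_f)
  next
    case (Op c args)
    have gw: "range (g \<circ> w) \<subseteq> V" using Op.prems gV by auto
    have "\<forall>a\<in>set args. g (eval F' w a) = eval F (g \<circ> w) a"
    proof
      fix a assume a: "a \<in> set args"
      then have wa: "wf ar a" using Op.prems by auto
      have "eval F (g \<circ> w) a \<in> V" using eval_in_V[OF L gw wa] .
      then show "g (eval F' w a) = eval F (g \<circ> w) a"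
        using Op.IH[OF a wa Op.prems(2)] inj unfolding g_def by (simp add: comp_def)
    qed
    then have "map g (map (eval F' w) args) = map (eval F (g \<circ> w)) args" by simp
    then show ?case by (simp add: F'_def comp_def cong: map_cong)
  qed
  show ?thesis
  proof (intro exI conjI allI)
    show "is_logic ar (f ` V) (f ` D) F'"
      unfolding is_logic_def
    proof (intro conjI allI impI)
      show "f ` D \<subseteq> f ` V" using DV by auto
      fix c and ns :: "nat list"
      assume ns: "length ns = ar c \<and> set ns \<subseteq> f ` V"
      then have "length (map g ns) = ar c \<and> set (map g ns) \<subseteq> V" using gV by auto
      then have "F c (map g ns) \<in> V" using L unfolding is_logic_def by blast
      then show "F' c ns \<in> f ` V" unfolding F'_def by blast
    qed
    show "finite (f ` V)" using fin by simp
    show "card (f ` V) = card V" using card_image[OF inj] .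
    fix B
    show "taut ar (f ` V) (f ` D) F' B = taut ar V D F B"
    proof
      assume T: "taut ar (f ` V) (f ` D) F' B"
      show "taut ar V D F B" unfolding taut_def
      proof (intro conjI allI impI)
        show wB: "wf ar B" using T by (simp add: taut_def)
        fix v :: "nat \<Rightarrow> _" assume v: "range v \<subseteq> V"
        then have r: "range (f \<circ> v) \<subseteq> f ` V" by auto
        have "g \<circ> (f \<circ> v) = v" unfolding g_def
        proof
          fix x have "v x \<in> V" using v by auto
          then show "(inv_into V f \<circ> (f \<circ> v)) x = v x" using inj by (simp add: inv_into_f_f)
        qed
        then have "eval F' (f \<circ> v) B = f (eval F v B)" using key[OF wB r] by simp
        moreover have "eval F' (f \<circ> v) B \<in> f ` D" using T r unfolding taut_def by auto
        ultimately have "f (eval F v B) \<in> f ` D" by simp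
        then show "eval F v B \<in> D" using eval_in_V[OF L v wB] DV inj
          by (metis inj_on_image_mem_iff)
      qed
    next
      assume T: "taut ar V D F B"
      show "taut ar (f ` V) (f ` D) F' B" unfolding taut_def
      proof (intro conjI allI impI)
        show wB: "wf ar B" using T by (simp add: taut_def)
        fix w :: "nat \<Rightarrow> _" assume w: "range w \<subseteq> f ` V"
        then have "range (g \<circ> w) \<subseteq> V" using gV by auto
        then show "eval F' w B \<in> f ` D" using key[OF wB w] T unfolding taut_def by auto
      qed
    qed
  qed
qed

lemma single_logic:
  fixes V D :: "'v set" and F :: "'c \<Rightarrow> 'v list \<Rightarrow> 'v"
  assumes L: "is_logic ar V D F" and wA: "wf ar A" and nt: "\<not> taut ar V D F A"
  shows "\<exists>(V1::'v option set) D1 F1. is_logic ar V1 D1 F1 \<and> finite V1 \<and> V1 \<noteq> {} \<and>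
           \<not> taut ar V1 D1 F1 A \<and> (\<forall>B. taut ar V D F B \<longrightarrow> taut ar V1 D1 F1 B) \<and>
           card V1 \<le> card (subformulas A) + 1"
proof -
  obtain v where v: "range v \<subseteq> V" and vA: "eval F v A \<notin> D"
    using nt wA unfolding taut_def by blast
  define W where "W = eval F v ` subformulas A"
  have WV: "W \<subseteq> V" unfolding W_def
    using eval_in_V[OF L v] wf_subformulas[OF wA] by auto
  have finW: "finite W" unfolding W_def by (simp add: finite_subformulas)
  have AW: "eval F v A \<in> W" unfolding W_def using self_subformula by blast
  define V1 where "V1 = insert None (Some ` W)"
  define D1 where "D1 = insert None (Some ` (D \<inter> W))"
  define F1 where "F1 = (\<lambda>c (xs::'v option list). if set xs \<subseteq> Some ` W \<and> F c (map the xs) \<in> W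
                     then Some (F c (map the xs)) else None)"
  have F1_Some: "set xs \<subseteq> Some ` W \<Longrightarrow> F c (map the xs) \<in> W \<Longrightarrow> F1 c xs = Some (F c (map the xs))"
    for c xs by (simp add: F1_def)
  have L1: "is_logic ar V1 D1 F1" unfolding is_logic_def V1_def D1_def F1_def by auto
  define w0 where "w0 = (\<lambda>n. Some (if v n \<in> W then v n else eval F v A))"
  have claim1: "B \<in> subformulas A \<Longrightarrow> eval F1 w0 B = Some (eval F v B)" for B
  proof (induction B)
    case (Var n)
    then have "v n \<in> W" unfolding W_def by force
    then show ?case by (simp add: w0_def)
  next
    case (Op c args)
    have IH: "\<forall>a\<in>set args. eval F1 w0 a = Some (eval F v a)"
    proof
      fix a assume a: "a \<in> set args"
      have "a \<in> subformulas (Op c args)" using a self_subformula by auto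
      then have "a \<in> subformulas A" using subformulas_trans Op.prems by blast
      then show "eval F1 w0 a = Some (eval F v a)" using Op.IH a by blast
    qed
    have m: "map (eval F1 w0) args = map (Some \<circ> eval F v) args" using IH by simp
    have sub: "\<forall>a\<in>set args. a \<in> subformulas A"
      using Op.prems subformulas_trans self_subformula by fastforce
    have s: "set (map (eval F1 w0) args) \<subseteq> Some ` W" unfolding m W_def using sub by auto
    have t: "map the (map (eval F1 w0) args) = map (eval F v) args" unfolding m by simp
    have "F c (map (eval F v) args) \<in> W" unfolding W_def using Op.prems
      by (metis eval.simps(2) image_eqI)
    then have "F1 c (map (eval F1 w0) args) = Some (F c (map (eval F v) args))"
      using F1_Some[OF s] t by metis
    then show ?case by simp
  qed
  define x0 where "x0 = v 0"
  have x0: "x0 \<in> V" using v x0_def by auto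
  have claim2: "eval F1 w B \<noteq> None \<Longrightarrow> eval F1 w B = Some (eval F (\<lambda>n. case w n of None \<Rightarrow> x0 | Some x \<Rightarrow> x) B)"
    for w B
  proof (induction B)
    case (Var n) then show ?case by auto
  next
    case (Op c args)
    let ?w' = "\<lambda>n. case w n of None \<Rightarrow> x0 | Some x \<Rightarrow> x"
    have c: "set (map (eval F1 w) args) \<subseteq> Some ` W \<and> F c (map the (map (eval F1 w) args)) \<in> W"
      using Op.prems by (simp add: F1_def split: if_splits)
    have "\<forall>a\<in>set args. the (eval F1 w a) = eval F ?w' a"
    proof
      fix a assume a: "a \<in> set args"
      then have "eval F1 w a \<noteq> None" using c by auto
      then show "the (eval F1 w a) = eval F ?w' a" using Op.IH a by auto
    qed
    then have t: "map the (map (eval F1 w) args) = map (eval F ?w') args" by simp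
    have "F1 c (map (eval F1 w) args) = Some (F c (map (eval F ?w') args))"
      using F1_Some[of "map (eval F1 w) args" c] c t by metis
    then show ?case by simp
  qed
  show ?thesis
  proof (intro exI conjI allI impI)
    show "is_logic ar V1 D1 F1" by (rule L1)
    show "finite V1" unfolding V1_def using finW by simp
    show "V1 \<noteq> {}" unfolding V1_def by simp
    show "\<not> taut ar V1 D1 F1 A"
    proof
      assume T: "taut ar V1 D1 F1 A"
      have "range w0 \<subseteq> V1" unfolding w0_def V1_def using AW by auto
      then have "eval F1 w0 A \<in> D1" using T unfolding taut_def by blast
      then show False using claim1[OF self_subformula] vA unfolding D1_def by auto
    qed
    have "card V1 \<le> card (Some ` W) + 1" unfolding V1_def using finW
      by (simp add: card_insert_if)
    also have "\<dots> \<le> card W + 1" using card_image_le[OF finW] by simp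
    also have "\<dots> \<le> card (subformulas A) + 1" unfolding W_def
      using card_image_le[OF finite_subformulas] by simp
    finally show "card V1 \<le> card (subformulas A) + 1" .
    fix B assume TB: "taut ar V D F B"
    show "taut ar V1 D1 F1 B" unfolding taut_def
    proof (intro conjI allI impI)
      show "wf ar B" using TB by (simp add: taut_def)
      fix w :: "nat \<Rightarrow> _" assume w: "range w \<subseteq> V1"
      let ?w' = "\<lambda>n. case w n of None \<Rightarrow> x0 | Some x \<Rightarrow> x"
      have rw: "range ?w' \<subseteq> V"
      proof
        fix y assume "y \<in> range ?w'"
        then obtain n where n: "y = ?w' n" by auto
        have "w n \<in> V1" using w by auto
        then show "y \<in> V" using n x0 WV unfolding V1_def by auto
      qed
      have inV1: "eval F1 w B \<in> V1"
      proof (cases B)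
        case (Var n) then show ?thesis using w by auto
      next
        case (Op c args) then show ?thesis unfolding V1_def by (auto simp: F1_def)
      qed
      show "eval F1 w B \<in> D1"
      proof (cases "eval F1 w B = None")
        case True then show ?thesis unfolding D1_def by simp
      next
        case False
        have e: "eval F1 w B = Some (eval F ?w' B)" using claim2[OF False] .
        have "eval F ?w' B \<in> D" using TB rw unfolding taut_def by blast
        moreover have "eval F ?w' B \<in> W" using inV1 e unfolding V1_def by auto
        ultimately show ?thesis using e unfolding D1_def by auto
      qed
    qed
  qed
qed

lemma main_lemma:
  fixes ar :: "'c \<Rightarrow> nat"
    and V D :: "'v set" and F :: "'c \<Rightarrow> 'v list \<Rightarrow> 'v"
    and As :: "'c form list"
  assumes L: "is_logic ar V D F"
  shows "(\<forall>A\<in>set As. wf ar A \<and> \<not> taut ar V D F A) \<Longrightarrow>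
         \<exists>(V'::nat set) D' F'. is_logic ar V' D' F' \<and> finite V' \<and> V' \<noteq> {} \<and>
           (\<forall>A\<in>set As. \<not> taut ar V' D' F' A) \<and>
           (\<forall>A. taut ar V D F A \<longrightarrow> taut ar V' D' F' A) \<and>
           card V' \<le> (\<Prod>A\<leftarrow>As. card (subformulas A) + 1)"
proof (induction As)
  case Nil
  show ?case
  proof (intro exI conjI allI impI)
    show "is_logic ar {0::nat} {0} (\<lambda>c xs. 0)" unfolding is_logic_def by auto
    fix A assume "taut ar V D F A"
    then have wA: "wf ar A" by (simp add: taut_def)
    show "taut ar {0::nat} {0} (\<lambda>c xs. 0) A" unfolding taut_def
    proof (intro conjI allI impI)
      show "wf ar A" by (rule wA)
      fix w :: "nat \<Rightarrow> nat" assume "range w \<subseteq> {0}"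
      then show "eval (\<lambda>c xs. 0) w A \<in> {0}" by (cases A) auto
    qed
  qed auto
next
  case (Cons A As)
  then have hA: "wf ar A" "\<not> taut ar V D F A" by auto
  obtain V1 :: "'v option set" and D1 F1 where L1: "is_logic ar V1 D1 F1" and f1: "finite V1" and n1: "V1 \<noteq> {}"
    and t1: "\<not> taut ar V1 D1 F1 A" and p1: "\<forall>B. taut ar V D F B \<longrightarrow> taut ar V1 D1 F1 B"
    and c1: "card V1 \<le> card (subformulas A) + 1"
    using single_logic[OF L hA] by blast
  obtain V2 :: "nat set" and D2 F2 where L2: "is_logic ar V2 D2 F2" and f2: "finite V2" and n2: "V2 \<noteq> {}"
    and t2: "\<forall>A\<in>set As. \<not> taut ar V2 D2 F2 A" and p2: "\<forall>B. taut ar V D F B \<longrightarrow> taut ar V2 D2 F2 B"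
    and c2: "card V2 \<le> (\<Prod>A\<leftarrow>As. card (subformulas A) + 1)"
  proof -
    have "\<forall>A\<in>set As. wf ar A \<and> \<not> taut ar V D F A" using Cons.prems by simp
    from Cons.IH[OF this] show ?thesis using that by blast
  qed
  let ?F = "\<lambda>c xs. (F1 c (map fst xs), F2 c (map snd xs))"
  have LP: "is_logic ar (V1 \<times> V2) (D1 \<times> D2) ?F" using prod_logic(1)[OF L1 L2 n1 n2] .
  have TP: "\<And>B. taut ar (V1 \<times> V2) (D1 \<times> D2) ?F B \<longleftrightarrow> taut ar V1 D1 F1 B \<and> taut ar V2 D2 F2 B"
    using prod_logic(2)[OF L1 L2 n1 n2] .
  have fP: "finite (V1 \<times> V2)" using f1 f2 by simp
  obtain V' :: "nat set" and D' F' where L': "is_logic ar V' D' F'" and f': "finite V'"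
    and c': "card V' = card (V1 \<times> V2)" and T': "\<forall>B. taut ar V' D' F' B \<longleftrightarrow> taut ar (V1 \<times> V2) (D1 \<times> D2) ?F B"
    using transfer_nat[OF LP fP] by blast
  have cP: "card (V1 \<times> V2) = card V1 * card V2" by (simp add: card_cartesian_product)
  have pos: "card V1 * card V2 > 0" using f1 f2 n1 n2 by (simp add: card_gt_0_iff)
  show ?case
  proof (intro exI conjI allI impI)
    show "is_logic ar V' D' F'" by (rule L')
    show "finite V'" by (rule f')
    show "V' \<noteq> {}" using c' cP pos by auto
    show "\<forall>B\<in>set (A # As). \<not> taut ar V' D' F' B" using T' TP t1 t2 by auto
    show "card V' \<le> (\<Prod>A\<leftarrow>A # As. card (subformulas A) + 1)"
      using c' cP mult_le_mono[OF c1 c2] by simp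
    fix B assume "taut ar V D F B"
    then show "taut ar V' D' F' B" using T' TP p1 p2 by auto
  qed
qed

theorem proposition2:
  fixes ar :: "'c::finite \<Rightarrow> nat"
    and V D :: "'v set" and F :: "'c \<Rightarrow> 'v list \<Rightarrow> 'v"
    and As :: "'c form list"
  assumes "is_logic ar V D F"
    and "\<forall>A\<in>set As. wf ar A \<and> \<not> taut ar V D F A"
  shows "\<exists>(V'::nat set) D' F'. is_logic ar V' D' F' \<and> finite V' \<and>
           (\<forall>A\<in>set As. \<not> taut ar V' D' F' A) \<and>
           (\<forall>A. taut ar V D F A \<longrightarrow> taut ar V' D' F' A) \<and>
           card V' \<le> (\<Prod>A\<leftarrow>As. card (subformulas A) + 1)"
  using main_lemma[OF assms(1) assms(2)] by blast

end
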